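(* Let $U$ be an $n\times n$ unitary matrix. Suppose $W$ is an $n\times n$ unitary matrix such that $U = W U' W^*$, where $$U' = \operatorname{diag}\Big( \begin{bmatrix}\xi_1 I_{n_1} & 0\\ 0 & \overline{\xi_1} I_{n_1}\end{bmatrix}, \ldots, \begin{bmatrix}\xi_d I_{n_d} & 0\\ 0 & \overline{\xi_d} I_{n_d}\end{bmatrix}, \begin{bmatrix} I_\ell & 0\\ 0 & -I_k\end{bmatrix}\Big),$$ with $n_1,\dots,n_d\ge 1$, $\ell,k\ge 0$, $2n_1+\cdots+2n_d+\ell+k = n$, and $\xi_1,\dots,\xi_d \in \mathbb{T}\setminus\{1,-1\}$ such that $\xi_1,\dots,\xi_d,\overline{\xi_1},\dots,\overline{\xi_d}$ are pairwise distinct (blocks $I_\ell$ or $-I_k$ are absent when $\ell=0$ or $k=0$). Then every conjugation $C$ on $\mathbb{C}^n$ with $CUC = U$ has the form $$C = W\, \operatorname{diag}\Big( \begin{bmatrix} 0 & V_1\\ V_1^t & 0\end{bmatrix}, \ldots, \begin{bmatrix} 0 & V_d\\ V_d^t & 0\end{bmatrix}, \begin{bmatrix} Q_\ell & 0\\ 0 & Q_k\end{bmatrix}\Big)\, J\, W^*,$$ where each $V_j$ is an $n_j\times n_j$ unitary matrix, $Q_\ell$ and $Q_k$ are $\ell\times\ell$ and $k\times k$ unitary matrices with $Q_\ell^t = Q_\ell$ and $Q_k^t = Q_k$ (absent when $\ell=0$, resp. $k=0$), and $J$ is the conjugation on $\mathbb{C}^n$ given by $J[x_1,\dots,x_n]^t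 = [\overline{x_1},\dots,\overline{x_n}]^t$.
   Context: A conjugation on $\mathbb{C}^n$ is an antilinear, isometric map $C$ with $C^2=I$. $I_m$ denotes the $m\times m$ identity matrix, $^t$ denotes transpose, $\mathbb{T}$ is the unit circle, and $\operatorname{diag}(\cdot)$ denotes a block diagonal matrix. *)

theory Defs
  imports "Jordan_Normal_Form.Schur_Decomposition"
begin

definition unitary_mat :: "nat \<Rightarrow> complex mat \<Rightarrow> bool" where
  "unitary_mat m A \<longleftrightarrow> A \<in> carrier_mat m m \<and>
     mat_adjoint A * A = 1\<^sub>m m \<and> A * mat_adjoint A = 1\<^sub>m m"

definition vnorm_sq :: "complex vec \<Rightarrow> real" where
  "vnorm_sq x = (\<Sum>i<dim_vec x. (cmod (x $ i))^2)"

definition conjugation :: "nat \<Rightarrow> (complex vec \<Rightarrow> complex vec) \<Rightarrow> bool" where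
  "conjugation m C \<longleftrightarrow>
     (\<forall>x\<in>carrier_vec m. C x \<in> carrier_vec m) \<and>
     (\<forall>x\<in>carrier_vec m. \<forall>y\<in>carrier_vec m. C (x + y) = C x + C y) \<and>
     (\<forall>a. \<forall>x\<in>carrier_vec m. C (a \<cdot>\<^sub>v x) = cnj a \<cdot>\<^sub>v C x) \<and>
     (\<forall>x\<in>carrier_vec m. vnorm_sq (C x) = vnorm_sq x) \<and>
     (\<forall>x\<in>carrier_vec m. C (C x) = x)"

definition rot_block :: "complex \<Rightarrow> nat \<Rightarrow> complex mat" where
  "rot_block \<xi> m = four_block_mat (\<xi> \<cdot>\<^sub>m 1\<^sub>m m) (0\<^sub>m m m) (0\<^sub>m m m) (cnj \<xi> \<cdot>\<^sub>m 1\<^sub>m m)"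

definition swap_block :: "complex mat \<Rightarrow> complex mat" where
  "swap_block V = four_block_mat (0\<^sub>m (dim_row V) (dim_row V)) V (transpose_mat V)
       (0\<^sub>m (dim_row V) (dim_row V))"

end

theory Submission
  imports Defs
begin
definition cm :: "complex mat \<Rightarrow> complex mat" where "cm A = map_mat cnj A"

lemma cm_dim[simp]: "dim_row (cm A) = dim_row A" "dim_col (cm A) = dim_col A"
  unfolding cm_def by simp_all
lemma cm_index[simp]: "i < dim_row A \<Longrightarrow> j < dim_col A \<Longrightarrow> cm A $$ (i,j) = cnj (A $$ (i,j))"
  unfolding cm_def by simp
lemma cm_carrier[simp]: "A \<in> carrier_mat r c \<Longrightarrow> cm A \<in> carrier_mat r c"
  unfolding carrier_mat_def by simp
lemma adj_dim[simp]: "dim_row (mat_adjoint A) = dim_col A" "dim_col (mat_adjoint A) = dim_row A"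
  unfolding mat_adjoint_def by simp_all
lemma adj_index[simp]: "i < dim_col A \<Longrightarrow> j < dim_row A \<Longrightarrow> mat_adjoint A $$ (i,j) = cnj (A $$ (j,i))"
  unfolding mat_adjoint_def by (simp add: mat_of_rows_index)
lemma adj_carrier[simp]: "A \<in> carrier_mat r c \<Longrightarrow> mat_adjoint A \<in> carrier_mat c r"
  unfolding carrier_mat_def by simp

lemma mult_sq_carrier[simp]: "A \<in> carrier_mat n n \<Longrightarrow> B \<in> carrier_mat n n \<Longrightarrow> A * B \<in> carrier_mat n n"
  by (rule mult_carrier_mat)

lemma adj_alt: "mat_adjoint A = transpose_mat (cm A)"
  by (rule eq_matI, simp_all)

lemma cm_cm[simp]: "cm (cm A) = A" by (rule eq_matI, simp_all)

lemma cm_mult: assumes "dim_col A = dim_row B" shows "cm (A * B) = cm A * cm B"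
proof (rule eq_matI)
  fix i j assume ij: "i < dim_row (cm A * cm B)" "j < dim_col (cm A * cm B)"
  have "cm (A * B) $$ (i, j) = cnj (\<Sum>x = 0..<dim_row B. A $$ (i,x) * B $$ (x, j))"
    using ij assms by (simp add: scalar_prod_def)
  also have "\<dots> = (\<Sum>x = 0..<dim_row B. cm A $$ (i,x) * cm B $$ (x, j))"
    using ij assms by (simp add: cnj_sum)
  also have "\<dots> = (cm A * cm B) $$ (i, j)"
    using ij assms by (simp add: scalar_prod_def)
  finally show "cm (A * B) $$ (i, j) = (cm A * cm B) $$ (i, j)" .
qed simp_all

lemma cm_one[simp]: "cm (1\<^sub>m n) = 1\<^sub>m n" by (rule eq_matI, simp_all)
lemma cm_transpose: "cm (transpose_mat A) = transpose_mat (cm A)" by (rule eq_matI, simp_all)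
lemma cm_adj: "cm (mat_adjoint A) = transpose_mat A" by (rule eq_matI, simp_all)
lemma adj_adj[simp]: "mat_adjoint (mat_adjoint (A :: complex mat)) = A"
proof (rule eq_matI)
  fix i j assume "i < dim_row A" "j < dim_col A"
  then show "mat_adjoint (mat_adjoint A) $$ (i, j) = A $$ (i, j)"
    using adj_index[of j A i] adj_index[of i "mat_adjoint A" j] by simp
qed simp_all
lemma adj_cm: "mat_adjoint (cm A) = transpose_mat A" by (rule eq_matI, simp_all)

lemma adj_mult: fixes A B :: "complex mat" assumes "A \<in> carrier_mat r n" "B \<in> carrier_mat n c"
  shows "mat_adjoint (A * B) = mat_adjoint B * mat_adjoint A"
proof -
  have "cm (A * B) = cm A * cm B" using assms by (intro cm_mult) auto
  then show ?thesis unfolding adj_alt using assms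
    by (simp add: transpose_mult[of "cm A" r n "cm B" c])
qed

lemma conj_mult_vec: assumes "dim_vec v = dim_col A" shows "conjugate (A *\<^sub>v v) = cm A *\<^sub>v conjugate v"
  by (rule eq_vecI, insert assms, simp_all add: scalar_prod_def cnj_sum)

lemma unitary_mult: fixes A B :: "complex mat" assumes "unitary_mat n A" "unitary_mat n B" shows "unitary_mat n (A * B)"
proof -
  have A: "A \<in> carrier_mat n n" and B: "B \<in> carrier_mat n n" using assms unfolding unitary_mat_def by auto
  have "mat_adjoint (A * B) * (A * B) = mat_adjoint B * ((mat_adjoint A * A) * B)"
    using A B by (simp add: adj_mult[OF A B] assoc_mult_mat[of _ n n _ n _ n] mult_carrier_mat)
  also have "\<dots> = 1\<^sub>m n" using assms B unfolding unitary_mat_def by simp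
  finally have 1: "mat_adjoint (A * B) * (A * B) = 1\<^sub>m n" .
  have X: "mat_adjoint B * mat_adjoint A \<in> carrier_mat n n" using A B by simp
  have "(A * B) * mat_adjoint (A * B) = A * ((B * mat_adjoint B) * mat_adjoint A)"
    using A B X assoc_mult_mat[of A n n B n "mat_adjoint B * mat_adjoint A" n]
    by (simp add: adj_mult[OF A B] assoc_mult_mat[of _ n n _ n _ n] mult_carrier_mat)
  also have "\<dots> = 1\<^sub>m n" using assms A unfolding unitary_mat_def by simp
  finally show ?thesis using 1 A B unfolding unitary_mat_def by auto
qed

lemma unitary_adj: "unitary_mat n A \<Longrightarrow> unitary_mat n (mat_adjoint A)"
  unfolding unitary_mat_def by auto

lemma unitary_cm: assumes "unitary_mat n A" shows "unitary_mat n (cm A)"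
proof -
  have A: "A \<in> carrier_mat n n" using assms unfolding unitary_mat_def by auto
  have e: "mat_adjoint (cm A) = cm (mat_adjoint A)" by (rule eq_matI, simp_all)
  have "mat_adjoint A * A = 1\<^sub>m n" "A * mat_adjoint A = 1\<^sub>m n" using assms unfolding unitary_mat_def by auto
  then have "cm (mat_adjoint A) * cm A = 1\<^sub>m n" "cm A * cm (mat_adjoint A) = 1\<^sub>m n"
    using A by (simp_all add: cm_mult[symmetric])
  then show ?thesis using A unfolding unitary_mat_def e by auto
qed


definition cmat :: "nat \<Rightarrow> (complex vec \<Rightarrow> complex vec) \<Rightarrow> complex mat" where
  "cmat n C = mat n n (\<lambda>(i,j). C (unit_vec n j) $ i)"

lemma cmat_carrier[simp]: "cmat n C \<in> carrier_mat n n" unfolding cmat_def by simp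

lemma cmat_dim[simp]: "dim_row (cmat n C) = n" "dim_col (cmat n C) = n" unfolding cmat_def by simp_all

lemma cmat_index[simp]: "i < n \<Longrightarrow> j < n \<Longrightarrow> cmat n C $$ (i,j) = C (unit_vec n j) $ i"
  unfolding cmat_def by simp

lemma conj_zero: assumes "conjugation n C" shows "C (0\<^sub>v n) = 0\<^sub>v n"
proof -
  have c: "C (0\<^sub>v n) \<in> carrier_vec n" using assms unfolding conjugation_def by auto
  have "(0::complex) \<cdot>\<^sub>v 0\<^sub>v n = 0\<^sub>v n" by (rule eq_vecI) auto
  then have "C (0\<^sub>v n) = C (0 \<cdot>\<^sub>v 0\<^sub>v n)" by simp
  also have "\<dots> = 0 \<cdot>\<^sub>v C (0\<^sub>v n)" using assms unfolding conjugation_def by auto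
  also have "\<dots> = 0\<^sub>v n" using c by auto
  finally show ?thesis .
qed

lemma conj_rep: assumes C: "conjugation n C" and y: "y \<in> carrier_vec n"
  shows "C y = cmat n C *\<^sub>v conjugate y"
proof -
  define yk where "yk k = vec n (\<lambda>i. if i < k then y $ i else 0)" for k
  define tk where "tk k = vec n (\<lambda>i. \<Sum>j<k. cmat n C $$ (i,j) * cnj (y $ j))" for k
  have add: "\<And>a b. a \<in> carrier_vec n \<Longrightarrow> b \<in> carrier_vec n \<Longrightarrow> C (a + b) = C a + C b"
   and sm: "\<And>c a. a \<in> carrier_vec n \<Longrightarrow> C (c \<cdot>\<^sub>v a) = cnj c \<cdot>\<^sub>v C a"
   and car: "\<And>a. a \<in> carrier_vec n \<Longrightarrow> C a \<in> carrier_vec n"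
    using C unfolding conjugation_def by auto
  have "k \<le> n \<Longrightarrow> C (yk k) = tk k" for k
  proof (induction k)
    case 0
    have "yk 0 = 0\<^sub>v n" "tk 0 = 0\<^sub>v n" unfolding yk_def tk_def by (auto intro!: eq_vecI)
    then show ?case using conj_zero[OF C] by simp
  next
    case (Suc k)
    then have k: "k < n" by simp
    have e: "yk (Suc k) = yk k + (y $ k) \<cdot>\<^sub>v unit_vec n k"
      unfolding yk_def using k by (intro eq_vecI) (auto simp: less_Suc_eq)
    have "C (yk (Suc k)) = C (yk k) + cnj (y $ k) \<cdot>\<^sub>v C (unit_vec n k)"
      unfolding e by (subst add) (auto simp: yk_def sm)
    also have "\<dots> = tk k + cnj (y $ k) \<cdot>\<^sub>v C (unit_vec n k)" using Suc k by simp
    also have "\<dots> = tk (Suc k)"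
    proof (rule eq_vecI)
      fix i assume "i < dim_vec (tk (Suc k))"
      then have i: "i < n" unfolding tk_def by simp
      have ck: "C (unit_vec n k) \<in> carrier_vec n" using car by simp
      show "(tk k + cnj (y $ k) \<cdot>\<^sub>v C (unit_vec n k)) $ i = tk (Suc k) $ i"
        using i k ck unfolding tk_def by (simp add: mult.commute)
    qed (auto simp: tk_def car)
    finally show ?case .
  qed
  from this[of n] have "C (yk n) = tk n" by simp
  moreover have "yk n = y" unfolding yk_def using y by (intro eq_vecI) auto
  moreover have "tk n = cmat n C *\<^sub>v conjugate y"
    unfolding tk_def using y by (intro eq_vecI) (auto simp: scalar_prod_def lessThan_atLeast0)
  ultimately show ?thesis by simp
qed


lemma vnorm_vec: "vnorm_sq (vec n f) = (\<Sum>p<n. (cmod (f p))^2)"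
  unfolding vnorm_sq_def by simp

lemma cmod_sq_add: "(cmod (a + c*b))^2 = (cmod a)^2 + (cmod c)^2*(cmod b)^2 + 2 * Re (cnj c * (a * cnj b))"
  by (simp only: cmod_power2) (simp add: power2_eq_square algebra_simps)

lemma iso_unitary: assumes N: "N \<in> carrier_mat n n"
  and iso: "\<forall>x\<in>carrier_vec n. vnorm_sq (N *\<^sub>v x) = vnorm_sq x"
  shows "mat_adjoint N * N = 1\<^sub>m n"
proof -
  have ei: "N *\<^sub>v unit_vec n i = vec n (\<lambda>p. N $$ (p,i))" if "i < n" for i
    using N that by (intro eq_vecI) auto
  have act: "N *\<^sub>v (unit_vec n i + c \<cdot>\<^sub>v unit_vec n j) = vec n (\<lambda>p. N $$ (p,i) + c * N $$ (p,j))"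
    if "i < n" "j < n" for i j c
  proof -
    have "N *\<^sub>v (unit_vec n i + c \<cdot>\<^sub>v unit_vec n j) = N *\<^sub>v unit_vec n i + c \<cdot>\<^sub>v (N *\<^sub>v unit_vec n j)"
      using N that by (simp add: mult_add_distrib_mat_vec[of N n n] mult_mat_vec[of N n n])
    also have "\<dots> = vec n (\<lambda>p. N $$ (p,i) + c * N $$ (p,j))"
      unfolding ei[OF that(1)] ei[OF that(2)] by (intro eq_vecI) auto
    finally show ?thesis .
  qed
  have d: "(cmod (if p = i then 1 else (0::complex)))^2 = (if p = i then 1 else 0)" for p i :: nat
    by simp
  have ue: "vnorm_sq (unit_vec n i) = 1" if "i < n" for i
  proof -
    have "vnorm_sq (unit_vec n i) = (\<Sum>p<n. (cmod (unit_vec n i $ p))^2)"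
      unfolding vnorm_sq_def by simp
    also have "\<dots> = (\<Sum>p<n. (if p = i then 1 else 0))"
      using that d by (intro sum.cong) auto
    finally show ?thesis using that by simp
  qed
  define F where "F i = (\<Sum>p<n. (cmod (N $$ (p,i)))^2)" for i
  define S where "S i j = (\<Sum>p<n. N $$ (p,i) * cnj (N $$ (p,j)))" for i j
  have F1: "F i = 1" if "i < n" for i
  proof -
    have "vnorm_sq (N *\<^sub>v unit_vec n i) = 1" using iso ue that by simp
    then show ?thesis unfolding ei[OF that] vnorm_vec F_def .
  qed
  have key: "Re (cnj c * S i j) = 0" if "i < n" "j < n" "i \<noteq> j" for i j c
  proof -
    have x: "unit_vec n i + c \<cdot>\<^sub>v unit_vec n j \<in> carrier_vec n" by simp
    have "vnorm_sq (unit_vec n i + c \<cdot>\<^sub>v unit_vec n j) = (\<Sum>p<n. (if p = i then 1 else 0) + (if p = j then (cmod c)^2 else 0))"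
      unfolding vnorm_sq_def using that by (intro sum.cong) auto
    also have "\<dots> = 1 + (cmod c)^2" using that by (simp add: sum.distrib)
    finally have r: "vnorm_sq (unit_vec n i + c \<cdot>\<^sub>v unit_vec n j) = 1 + (cmod c)^2" .
    have "vnorm_sq (N *\<^sub>v (unit_vec n i + c \<cdot>\<^sub>v unit_vec n j)) =
       (\<Sum>p<n. (cmod (N $$ (p,i)))^2 + (cmod c)^2*(cmod (N $$ (p,j)))^2 + 2 * Re (cnj c * (N $$ (p,i) * cnj (N $$ (p,j)))))"
      unfolding act[OF that(1,2)] vnorm_vec cmod_sq_add by simp
    also have "\<dots> = F i + (cmod c)^2 * F j + 2 * Re (cnj c * S i j)"
      unfolding F_def S_def by (simp add: sum.distrib sum_distrib_left Re_sum)
    also have "\<dots> = 2 + (cmod c)^2 + 2 * Re (cnj c * S i j) - 1" using F1 that by simp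
    finally show ?thesis using iso x r by simp
  qed
  have S0: "S i j = 0" if "i < n" "j < n" "i \<noteq> j" for i j
  proof -
    have "Re (S i j) = 0" using key[OF that, of 1] by simp
    moreover have "Im (S i j) = 0" using key[OF that, of \<i>] by simp
    ultimately show ?thesis by (simp add: complex_eq_iff)
  qed
  show ?thesis
  proof (rule eq_matI)
    fix i j assume ij: "i < dim_row (1\<^sub>m n :: complex mat)" "j < dim_col (1\<^sub>m n :: complex mat)"
    then have i: "i < n" and j: "j < n" by auto
    have "(mat_adjoint N * N) $$ (i, j) = (\<Sum>p<n. cnj (N $$ (p,i)) * N $$ (p,j))"
      using N i j by (simp add: scalar_prod_def lessThan_atLeast0)
    also have "\<dots> = (1\<^sub>m n) $$ (i,j)"
    proof (cases "i = j")
      case True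
      have "(\<Sum>p<n. cnj (N $$ (p,i)) * N $$ (p,i)) = complex_of_real (F i)"
        unfolding F_def of_real_sum by (intro sum.cong) (use complex_norm_square in \<open>auto simp: mult.commute\<close>)
      then show ?thesis using True F1 i by simp
    next
      case False
      have "(\<Sum>p<n. cnj (N $$ (p,i)) * N $$ (p,j)) = cnj (S i j)"
        unfolding S_def by (simp add: mult.commute)
      then show ?thesis using False S0 i j by simp
    qed
    finally show "(mat_adjoint N * N) $$ (i, j) = 1\<^sub>m n $$ (i, j)" .
  qed (use N in auto)
qed


fun lam :: "(complex \<times> nat) list \<Rightarrow> nat \<Rightarrow> nat \<Rightarrow> complex" where
  "lam [] l i = (if i < l then 1 else -1)"
| "lam ((x,m)#ps) l i = (if i < m then x else if i < 2*m then cnj x else lam ps l (i - 2*m))"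

definition Dmat :: "(complex \<times> nat) list \<Rightarrow> nat \<Rightarrow> nat \<Rightarrow> complex mat" where
  "Dmat ps l k = diag_block_mat (map (\<lambda>(x,m). rot_block x m) ps @
      [four_block_mat (1\<^sub>m l) (0\<^sub>m l k) (0\<^sub>m k l) (- 1\<^sub>m k)])"

abbreviation dimp :: "(complex \<times> nat) list \<Rightarrow> nat \<Rightarrow> nat \<Rightarrow> nat" where
  "dimp ps l k \<equiv> 2 * sum_list (map snd ps) + l + k"

lemma Dmat_cons: "Dmat ((x,m)#ps) l k = four_block_mat (rot_block x m) (0\<^sub>m (2*m) (dim_col (Dmat ps l k)))
   (0\<^sub>m (dim_row (Dmat ps l k)) (2*m)) (Dmat ps l k)"
  unfolding Dmat_def by (simp add: Let_def rot_block_def mult_2)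

lemma Dmat_props: "Dmat ps l k \<in> carrier_mat (dimp ps l k) (dimp ps l k) \<and>
  (\<forall>i j. i < dimp ps l k \<longrightarrow> j < dimp ps l k \<longrightarrow> Dmat ps l k $$ (i,j) = (if i = j then lam ps l i else 0))"
proof (induction ps)
  case Nil
  have e: "Dmat [] l k = four_block_mat (1\<^sub>m l) (0\<^sub>m l k) (0\<^sub>m k l) (- 1\<^sub>m k)"
    unfolding Dmat_def by (simp only: list.map(1) append.simps(1) diag_block_mat_singleton)
  show ?case unfolding e
  proof (intro conjI allI impI)
    show "four_block_mat (1\<^sub>m l) (0\<^sub>m l k) (0\<^sub>m k l) (- 1\<^sub>m k) \<in> carrier_mat (dimp [] l k) (dimp [] l k)"
      by (simp add: four_block_carrier_mat)
    fix i j assume i: "i < dimp [] l k" and j: "j < dimp [] l k"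
    then have ij: "i < dim_row (1\<^sub>m l :: complex mat) + dim_row (- 1\<^sub>m k :: complex mat)"
       "j < dim_col (1\<^sub>m l :: complex mat) + dim_col (- 1\<^sub>m k :: complex mat)" by simp_all
    show "four_block_mat (1\<^sub>m l) (0\<^sub>m l k) (0\<^sub>m k l) (- 1\<^sub>m k) $$ (i, j) = (if i = j then lam [] l i else 0)"
      unfolding index_mat_four_block(1)[OF ij] using i j by (cases "i < l"; cases "j < l") (simp_all, arith)
  qed
next
  case (Cons p ps)
  obtain x m where p: "p = (x,m)" by force
  let ?D = "Dmat ps l k"
  have dD: "dim_row ?D = dimp ps l k" "dim_col ?D = dimp ps l k" using Cons.IH by auto
  have rb: "rot_block x m \<in> carrier_mat (2*m) (2*m)" unfolding rot_block_def by auto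
  have rbi: "i < 2*m \<Longrightarrow> j < 2*m \<Longrightarrow> rot_block x m $$ (i,j) = (if i = j then (if i < m then x else cnj x) else 0)" for i j
    unfolding rot_block_def by auto
  show ?case unfolding p Dmat_cons
  proof (intro conjI allI impI)
    show "four_block_mat (rot_block x m) (0\<^sub>m (2 * m) (dim_col ?D)) (0\<^sub>m (dim_row ?D) (2 * m)) ?D
      \<in> carrier_mat (dimp ((x, m) # ps) l k) (dimp ((x, m) # ps) l k)"
    proof -
      have Dc: "?D \<in> carrier_mat (dimp ps l k) (dimp ps l k)" using Cons.IH by blast
      have e: "dimp ((x, m) # ps) l k = 2*m + dimp ps l k" by simp
      show ?thesis unfolding e by (rule four_block_carrier_mat[OF rb Dc])
    qed
    fix i j assume i: "i < dimp ((x, m) # ps) l k" and j: "j < dimp ((x, m) # ps) l k"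
    show "four_block_mat (rot_block x m) (0\<^sub>m (2 * m) (dim_col ?D)) (0\<^sub>m (dim_row ?D) (2 * m)) ?D $$ (i, j) =
      (if i = j then lam ((x, m) # ps) l i else 0)"
    proof -
      have rd: "dim_row (rot_block x m) = 2*m" "dim_col (rot_block x m) = 2*m" using rb by auto
      have ij: "i < 2*m + dim_row ?D" "j < 2*m + dim_col ?D" using i j dD by auto
      show ?thesis
      proof (cases "i < 2*m")
        case True
        then show ?thesis using ij rd rbi[of i j] by (cases "j < 2*m") simp_all
      next
        case False
        note iF = False
        show ?thesis
        proof (cases "j < 2*m")
          case True
          then show ?thesis using ij rd iF by simp
        next
          case False
          have e: "(i - 2*m = j - 2*m) = (i = j)" using iF False by arith
          have "?D $$ (i - 2*m, j - 2*m) = (if i - 2*m = j - 2*m then lam ps l (i - 2*m) else 0)"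
            using Cons.IH ij dD iF False by simp
          then show ?thesis using ij rd iF False e by simp
        qed
      qed
    qed
  qed
qed

lemma Dmat_carrier: "Dmat ps l k \<in> carrier_mat (dimp ps l k) (dimp ps l k)"
  using Dmat_props by blast

lemma Dmat_index: "i < dimp ps l k \<Longrightarrow> j < dimp ps l k \<Longrightarrow> Dmat ps l k $$ (i,j) = (if i = j then lam ps l i else 0)"
  using Dmat_props by blast

lemma entry_cond: assumes M: "M \<in> carrier_mat (dimp ps l k) (dimp ps l k)"
  and comm: "M * cm (Dmat ps l k) = Dmat ps l k * M"
  and i: "i < dimp ps l k" and j: "j < dimp ps l k" and nz: "M $$ (i,j) \<noteq> 0"
  shows "lam ps l i = cnj (lam ps l j)"
proof -
  let ?n = "dimp ps l k"
  note D = Dmat_carrier[of ps l k]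
  have "(M * cm (Dmat ps l k)) $$ (i,j) = (\<Sum>p\<in>{0..<?n}. M $$ (i,p) * cnj (Dmat ps l k $$ (p,j)))"
    using M D i j by (simp add: scalar_prod_def)
  also have "\<dots> = (\<Sum>p\<in>{0..<?n}. if p = j then M $$ (i,j) * cnj (lam ps l j) else 0)"
    by (rule sum.cong) (use j Dmat_index in auto)
  also have "\<dots> = M $$ (i,j) * cnj (lam ps l j)" using j by simp
  finally have 1: "(M * cm (Dmat ps l k)) $$ (i,j) = M $$ (i,j) * cnj (lam ps l j)" .
  have "(Dmat ps l k * M) $$ (i,j) = (\<Sum>p\<in>{0..<?n}. Dmat ps l k $$ (i,p) * M $$ (p,j))"
    using M D i j by (simp add: scalar_prod_def)
  also have "\<dots> = (\<Sum>p\<in>{0..<?n}. if p = i then lam ps l i * M $$ (i,j) else 0)"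
    by (rule sum.cong) (use i Dmat_index in auto)
  also have "\<dots> = lam ps l i * M $$ (i,j)" using i by simp
  finally have 2: "(Dmat ps l k * M) $$ (i,j) = lam ps l i * M $$ (i,j)" .
  have "(M * cm (Dmat ps l k)) $$ (i,j) = (Dmat ps l k * M) $$ (i,j)" using comm by simp
  then have "M $$ (i,j) * cnj (lam ps l j) = lam ps l i * M $$ (i,j)" unfolding 1 2 .
  then have "M $$ (i,j) * (cnj (lam ps l j) - lam ps l i) = 0" by (simp add: algebra_simps)
  then show ?thesis using nz by simp
qed


lemma four_block_eq:
  fixes A B C D A' B' C' D' :: "'a :: zero mat"
  assumes "A \<in> carrier_mat r1 c1" "B \<in> carrier_mat r1 c2" "C \<in> carrier_mat r2 c1" "D \<in> carrier_mat r2 c2"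
    "A' \<in> carrier_mat r1 c1" "B' \<in> carrier_mat r1 c2" "C' \<in> carrier_mat r2 c1" "D' \<in> carrier_mat r2 c2"
    and eq: "four_block_mat A B C D = four_block_mat A' B' C' D'"
  shows "A = A' \<and> B = B' \<and> C = C' \<and> D = D'"
proof -
  have ix: "four_block_mat A B C D $$ (i,j) = four_block_mat A' B' C' D' $$ (i,j)" for i j
    using eq by simp
  have "A = A'"
  proof (rule eq_matI)
    fix i j assume "i < dim_row A'" "j < dim_col A'"
    then show "A $$ (i,j) = A' $$ (i,j)" using ix[of i j] assms(1-8) by simp
  qed (use assms in auto)
  moreover have "B = B'"
  proof (rule eq_matI)
    fix i j assume "i < dim_row B'" "j < dim_col B'"
    then show "B $$ (i,j) = B' $$ (i,j)" using ix[of i "j + c1"] assms(1-8) by simp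
  qed (use assms in auto)
  moreover have "C = C'"
  proof (rule eq_matI)
    fix i j assume "i < dim_row C'" "j < dim_col C'"
    then show "C $$ (i,j) = C' $$ (i,j)" using ix[of "i + r1" j] assms(1-8) by simp
  qed (use assms in auto)
  moreover have "D = D'"
  proof (rule eq_matI)
    fix i j assume "i < dim_row D'" "j < dim_col D'"
    then show "D $$ (i,j) = D' $$ (i,j)" using ix[of "i + r1" "j + c1"] assms(1-8) by simp
  qed (use assms in auto)
  ultimately show ?thesis by simp
qed

lemma adj_four_block:
  fixes A B C D :: "complex mat"
  assumes "A \<in> carrier_mat r1 c1" "B \<in> carrier_mat r1 c2" "C \<in> carrier_mat r2 c1" "D \<in> carrier_mat r2 c2"
  shows "mat_adjoint (four_block_mat A B C D) =
    four_block_mat (mat_adjoint A) (mat_adjoint C) (mat_adjoint B) (mat_adjoint D)"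
  by (rule eq_matI) (use assms in auto)

lemma adj_zero[simp]: "mat_adjoint (0\<^sub>m a b :: complex mat) = 0\<^sub>m b a"
  by (rule eq_matI) auto

lemma diag2_props:
  fixes A D :: "complex mat"
  assumes A: "A \<in> carrier_mat a a" and D: "D \<in> carrier_mat d d"
    and u: "unitary_mat (a + d) (four_block_mat A (0\<^sub>m a d) (0\<^sub>m d a) D)"
  shows "unitary_mat a A \<and> unitary_mat d D"
proof -
  let ?M = "four_block_mat A (0\<^sub>m a d) (0\<^sub>m d a) D"
  have adjM: "mat_adjoint ?M = four_block_mat (mat_adjoint A) (0\<^sub>m a d) (0\<^sub>m d a) (mat_adjoint D)"
    using adj_four_block[OF A _ _ D, of "0\<^sub>m a d" "0\<^sub>m d a"] by simp
  have aA: "mat_adjoint A \<in> carrier_mat a a" and aD: "mat_adjoint D \<in> carrier_mat d d" using A D by auto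
  have 1: "mat_adjoint ?M * ?M = four_block_mat (mat_adjoint A * A) (0\<^sub>m a d) (0\<^sub>m d a) (mat_adjoint D * D)"
    unfolding adjM using A D aA aD
    by (subst mult_four_block_mat[OF aA zero_carrier_mat zero_carrier_mat aD A zero_carrier_mat zero_carrier_mat D]) auto
  have 2: "?M * mat_adjoint ?M = four_block_mat (A * mat_adjoint A) (0\<^sub>m a d) (0\<^sub>m d a) (D * mat_adjoint D)"
    unfolding adjM using A D aA aD
    by (subst mult_four_block_mat[OF A zero_carrier_mat zero_carrier_mat D aA zero_carrier_mat zero_carrier_mat aD]) auto
  have e1: "four_block_mat (mat_adjoint A * A) (0\<^sub>m a d) (0\<^sub>m d a) (mat_adjoint D * D) =
            four_block_mat (1\<^sub>m a) (0\<^sub>m a d) (0\<^sub>m d a) (1\<^sub>m d)"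
    using u unfolding unitary_mat_def 1 by simp
  have e2: "four_block_mat (A * mat_adjoint A) (0\<^sub>m a d) (0\<^sub>m d a) (D * mat_adjoint D) =
            four_block_mat (1\<^sub>m a) (0\<^sub>m a d) (0\<^sub>m d a) (1\<^sub>m d)"
    using u unfolding unitary_mat_def 2 by simp
  have r1: "mat_adjoint A * A = 1\<^sub>m a \<and> mat_adjoint D * D = 1\<^sub>m d"
    using four_block_eq[OF _ _ _ _ _ _ _ _ e1, of a a d d] A D aA aD by auto
  have r2: "A * mat_adjoint A = 1\<^sub>m a \<and> D * mat_adjoint D = 1\<^sub>m d"
    using four_block_eq[OF _ _ _ _ _ _ _ _ e2, of a a d d] A D aA aD by auto
  show ?thesis using r1 r2 A D unfolding unitary_mat_def by auto
qed

lemma diag2_transpose: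
  fixes A D :: "complex mat"
  assumes A: "A \<in> carrier_mat a a" and D: "D \<in> carrier_mat d d"
    and t: "transpose_mat (four_block_mat A (0\<^sub>m a d) (0\<^sub>m d a) D) = four_block_mat A (0\<^sub>m a d) (0\<^sub>m d a) D"
  shows "transpose_mat A = A \<and> transpose_mat D = D"
proof -
  have "four_block_mat (transpose_mat A) (0\<^sub>m a d) (0\<^sub>m d a) (transpose_mat D) = four_block_mat A (0\<^sub>m a d) (0\<^sub>m d a) D"
    using t transpose_four_block_mat[OF A _ _ D, of "0\<^sub>m a d" "0\<^sub>m d a"] by simp
  from four_block_eq[OF _ _ _ _ _ _ _ _ this, of a a d d] show ?thesis using A D by auto
qed

lemma split_diag:
  fixes M :: "complex mat"
  assumes M: "M \<in> carrier_mat (a + d) (a + d)"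
    and z1: "\<And>i j. i < a \<Longrightarrow> a \<le> j \<Longrightarrow> j < a + d \<Longrightarrow> M $$ (i,j) = 0"
    and z2: "\<And>i j. a \<le> i \<Longrightarrow> i < a + d \<Longrightarrow> j < a \<Longrightarrow> M $$ (i,j) = 0"
  shows "M = four_block_mat (mat a a (\<lambda>(i,j). M $$ (i,j))) (0\<^sub>m a d) (0\<^sub>m d a) (mat d d (\<lambda>(i,j). M $$ (i + a, j + a)))"
proof (rule eq_matI)
  fix i j assume "i < dim_row (four_block_mat (mat a a (\<lambda>(i,j). M $$ (i,j))) (0\<^sub>m a d) (0\<^sub>m d a) (mat d d (\<lambda>(i,j). M $$ (i + a, j + a))))"
    "j < dim_col (four_block_mat (mat a a (\<lambda>(i,j). M $$ (i,j))) (0\<^sub>m a d) (0\<^sub>m d a) (mat d d (\<lambda>(i,j). M $$ (i + a, j + a))))"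
  then have i: "i < a + d" and j: "j < a + d" by auto
  show "M $$ (i,j) = four_block_mat (mat a a (\<lambda>(i,j). M $$ (i,j))) (0\<^sub>m a d) (0\<^sub>m d a) (mat d d (\<lambda>(i,j). M $$ (i + a, j + a))) $$ (i,j)"
    using i j z1[of i j] z2[of i j] by (cases "i < a"; cases "j < a") simp_all
qed (use M in auto)

lemma swap_unitary:
  fixes V :: "complex mat"
  assumes V: "V \<in> carrier_mat m m" and u: "unitary_mat (m + m) (swap_block V)"
  shows "unitary_mat m V"
proof -
  have S: "swap_block V = four_block_mat (0\<^sub>m m m) V (transpose_mat V) (0\<^sub>m m m)"
    unfolding swap_block_def using V by simp
  have aV: "mat_adjoint V \<in> carrier_mat m m" and tV: "transpose_mat V \<in> carrier_mat m m"
    and atV: "mat_adjoint (transpose_mat V) \<in> carrier_mat m m" using V by auto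
  have adjS: "mat_adjoint (swap_block V) = four_block_mat (0\<^sub>m m m) (mat_adjoint (transpose_mat V)) (mat_adjoint V) (0\<^sub>m m m)"
    unfolding S using adj_four_block[of "0\<^sub>m m m" m m V m "transpose_mat V" m "0\<^sub>m m m"] V by simp
  have 1: "mat_adjoint (swap_block V) * swap_block V = four_block_mat
     (mat_adjoint (transpose_mat V) * transpose_mat V) (0\<^sub>m m m) (0\<^sub>m m m) (mat_adjoint V * V)"
    unfolding adjS using V aV tV atV
    by (subst S, subst mult_four_block_mat[OF zero_carrier_mat atV aV zero_carrier_mat zero_carrier_mat V tV zero_carrier_mat]) auto
  have 2: "swap_block V * mat_adjoint (swap_block V) = four_block_mat
     (V * mat_adjoint V) (0\<^sub>m m m) (0\<^sub>m m m) (transpose_mat V * mat_adjoint (transpose_mat V))"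
    unfolding adjS using V aV tV atV
    by (subst S, subst mult_four_block_mat[OF zero_carrier_mat V tV zero_carrier_mat zero_carrier_mat atV aV zero_carrier_mat]) auto
  have e1: "four_block_mat (mat_adjoint (transpose_mat V) * transpose_mat V) (0\<^sub>m m m) (0\<^sub>m m m) (mat_adjoint V * V)
     = four_block_mat (1\<^sub>m m) (0\<^sub>m m m) (0\<^sub>m m m) (1\<^sub>m m)"
    using u unfolding unitary_mat_def 1 by simp
  have e2: "four_block_mat (V * mat_adjoint V) (0\<^sub>m m m) (0\<^sub>m m m) (transpose_mat V * mat_adjoint (transpose_mat V))
     = four_block_mat (1\<^sub>m m) (0\<^sub>m m m) (0\<^sub>m m m) (1\<^sub>m m)"
    using u unfolding unitary_mat_def 2 by simp
  have "mat_adjoint V * V = 1\<^sub>m m"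
    using four_block_eq[OF _ _ _ _ _ _ _ _ e1, of m m m m] V aV tV atV by auto
  moreover have "V * mat_adjoint V = 1\<^sub>m m"
    using four_block_eq[OF _ _ _ _ _ _ _ _ e2, of m m m m] V aV tV atV by auto
  ultimately show ?thesis using V unfolding unitary_mat_def by auto
qed

lemma lam_range: "lam ps l i \<in> set (map fst ps) \<union> cnj ` set (map fst ps) \<union> {1, -1}"
proof (induction ps arbitrary: i)
  case Nil then show ?case by simp
next
  case (Cons p ps)
  obtain x m where p: "p = (x,m)" by force
  show ?case unfolding p using Cons.IH[of "i - 2*m"] by auto
qed


lemma blockG:
  assumes "M \<in> carrier_mat (dimp ps l k) (dimp ps l k)"
    and "unitary_mat (dimp ps l k) M" and "transpose_mat M = M"
    and "\<forall>i j. i < dimp ps l k \<longrightarrow> j < dimp ps l k \<longrightarrow> M $$ (i,j) \<noteq> 0 \<longrightarrow> lam ps l i = cnj (lam ps l j)"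
    and "\<forall>x\<in>set (map fst ps). x \<noteq> 1 \<and> x \<noteq> -1"
    and "distinct (map fst ps @ map cnj (map fst ps))"
  shows "\<exists>Vs Ql Qk. length Vs = length ps \<and> (\<forall>j<length ps. unitary_mat (snd (ps!j)) (Vs!j)) \<and>
     unitary_mat l Ql \<and> transpose_mat Ql = Ql \<and> unitary_mat k Qk \<and> transpose_mat Qk = Qk \<and>
     M = diag_block_mat (map swap_block Vs @ [four_block_mat Ql (0\<^sub>m l k) (0\<^sub>m k l) Qk])"
  using assms
proof (induction ps arbitrary: M)
  case Nil
  have Mc: "M \<in> carrier_mat (l + k) (l + k)" using Nil.prems(1) by simp
  have ent: "i < l + k \<Longrightarrow> j < l + k \<Longrightarrow> M $$ (i,j) \<noteq> 0 \<Longrightarrow> lam [] l i = cnj (lam [] l j)" for i j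
    using Nil.prems(4) by simp
  define Ql where "Ql = mat l l (\<lambda>(i,j). M $$ (i,j))"
  define Qk where "Qk = mat k k (\<lambda>(i,j). M $$ (i + l, j + l))"
  have Me: "M = four_block_mat Ql (0\<^sub>m l k) (0\<^sub>m k l) Qk"
    unfolding Ql_def Qk_def
  proof (rule split_diag[OF Mc])
    fix i j assume "i < l" "l \<le> j" "j < l + k"
    then show "M $$ (i,j) = 0" using ent[of i j] by force
  next
    fix i j assume "l \<le> i" "i < l + k" "j < l"
    then show "M $$ (i,j) = 0" using ent[of i j] by force
  qed
  have Qlc: "Ql \<in> carrier_mat l l" and Qkc: "Qk \<in> carrier_mat k k" unfolding Ql_def Qk_def by auto
  have u: "unitary_mat (l + k) (four_block_mat Ql (0\<^sub>m l k) (0\<^sub>m k l) Qk)" using Nil.prems(2) Me by simp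
  have t: "transpose_mat (four_block_mat Ql (0\<^sub>m l k) (0\<^sub>m k l) Qk) = four_block_mat Ql (0\<^sub>m l k) (0\<^sub>m k l) Qk"
    using Nil.prems(3) Me by simp
  show ?case
    apply (rule exI[of _ "[]"], rule exI[of _ Ql], rule exI[of _ Qk])
    using diag2_props[OF Qlc Qkc u] diag2_transpose[OF Qlc Qkc t] Me by (simp del: diag_block_mat.simps(2))
next
  case (Cons p ps)
  obtain x m where p: "p = (x,m)" by force
  let ?n = "dimp ps l k"
  let ?xs = "map fst ps"
  have dn: "dimp (p # ps) l k = 2*m + ?n" unfolding p by simp
  have Mc: "M \<in> carrier_mat (2*m + ?n) (2*m + ?n)" using Cons.prems(1) dn by (simp add: add.assoc)
  have ent: "i < 2*m + ?n \<Longrightarrow> j < 2*m + ?n \<Longrightarrow> M $$ (i,j) \<noteq> 0 \<Longrightarrow> lam ((x,m) # ps) l i = cnj (lam ((x,m) # ps) l j)" for i j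
    using Cons.prems(4) dn p by simp
  have x1: "x \<noteq> 1" "x \<noteq> -1" using Cons.prems(5) p by auto
  have dst: "distinct (x # ?xs @ cnj x # map cnj ?xs)" using Cons.prems(6) p by simp
  then have xnot: "x \<notin> set ?xs" "x \<notin> cnj ` set ?xs" "x \<noteq> cnj x" "cnj x \<notin> set ?xs"
    and dst': "distinct (?xs @ map cnj ?xs)" by (auto simp: image_iff)
  have bad: "y \<noteq> x \<and> y \<noteq> cnj x \<and> cnj y \<noteq> x \<and> cnj y \<noteq> cnj x" if "y \<in> set ?xs \<union> cnj ` set ?xs \<union> {1, -1}" for y
  proof -
    have "cnj x \<noteq> 1" "cnj x \<noteq> -1" using x1 by (auto simp: complex_eq_iff)
    then show ?thesis using that xnot x1 by (auto simp: image_iff)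
  qed
  have lam_lo: "lam ((x,m) # ps) l i \<in> {x, cnj x}" if "i < 2*m" for i using that by simp
  have lam_hi: "lam ((x,m) # ps) l i = lam ps l (i - 2*m)" if "\<not> i < 2*m" for i using that by simp
  define A where "A = mat (2*m) (2*m) (\<lambda>(i,j). M $$ (i,j))"
  define D where "D = mat ?n ?n (\<lambda>(i,j). M $$ (i + 2*m, j + 2*m))"
  have Me: "M = four_block_mat A (0\<^sub>m (2*m) ?n) (0\<^sub>m ?n (2*m)) D"
    unfolding A_def D_def
  proof (rule split_diag[OF Mc])
    fix i j assume ij: "i < 2*m" "2*m \<le> j" "j < 2*m + ?n"
    show "M $$ (i,j) = 0"
    proof (rule ccontr)
      assume "M $$ (i,j) \<noteq> 0"
      then have "lam ((x,m) # ps) l i = cnj (lam ((x,m) # ps) l j)" using ent[of i j] ij by simp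
      then show False using lam_lo[of i] lam_hi[of j] bad[OF lam_range[of ps l "j - 2*m"]] ij by auto
    qed
  next
    fix i j assume ij: "2*m \<le> i" "i < 2*m + ?n" "j < 2*m"
    show "M $$ (i,j) = 0"
    proof (rule ccontr)
      assume "M $$ (i,j) \<noteq> 0"
      then have "lam ((x,m) # ps) l i = cnj (lam ((x,m) # ps) l j)" using ent[of i j] ij by simp
      then show False using lam_lo[of j] lam_hi[of i] bad[OF lam_range[of ps l "i - 2*m"]] ij by auto
    qed
  qed
  have Ac: "A \<in> carrier_mat (2*m) (2*m)" and Dc: "D \<in> carrier_mat ?n ?n" unfolding A_def D_def by auto
  have u: "unitary_mat (2*m + ?n) (four_block_mat A (0\<^sub>m (2*m) ?n) (0\<^sub>m ?n (2*m)) D)"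
    using Cons.prems(2) unfolding dn[symmetric] Me[symmetric] .
  have t: "transpose_mat (four_block_mat A (0\<^sub>m (2*m) ?n) (0\<^sub>m ?n (2*m)) D) = four_block_mat A (0\<^sub>m (2*m) ?n) (0\<^sub>m ?n (2*m)) D"
    using Cons.prems(3) Me by simp
  note AD = diag2_props[OF Ac Dc u] diag2_transpose[OF Ac Dc t]
  have Dent: "\<forall>i j. i < ?n \<longrightarrow> j < ?n \<longrightarrow> D $$ (i,j) \<noteq> 0 \<longrightarrow> lam ps l i = cnj (lam ps l j)"
  proof (intro allI impI)
    fix i j assume ij: "i < ?n" "j < ?n" "D $$ (i,j) \<noteq> 0"
    then have "M $$ (i + 2*m, j + 2*m) \<noteq> 0" unfolding D_def by simp
    then have "lam ((x,m) # ps) l (i + 2*m) = cnj (lam ((x,m) # ps) l (j + 2*m))" using ent[of "i + 2*m" "j + 2*m"] ij by simp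
    then show "lam ps l i = cnj (lam ps l j)" by simp
  qed
  have xs1: "\<forall>x\<in>set ?xs. x \<noteq> 1 \<and> x \<noteq> -1" using Cons.prems(5) by simp
  obtain Vs Ql Qk where IH: "length Vs = length ps" "\<forall>j<length ps. unitary_mat (snd (ps!j)) (Vs!j)"
     "unitary_mat l Ql" "transpose_mat Ql = Ql" "unitary_mat k Qk" "transpose_mat Qk = Qk"
     "D = diag_block_mat (map swap_block Vs @ [four_block_mat Ql (0\<^sub>m l k) (0\<^sub>m k l) Qk])"
    using Cons.IH[OF Dc] AD Dent xs1 dst' by blast
  define V where "V = mat m m (\<lambda>(i,j). M $$ (i, j + m))"
  have Vc: "V \<in> carrier_mat m m" unfolding V_def by simp
  have Vi: "V $$ (i,j) = M $$ (i, j + m)" if "i < m" "j < m" for i j unfolding V_def using that by simp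
  have Msym: "M $$ (i,j) = M $$ (j,i)" if "i < 2*m + ?n" "j < 2*m + ?n" for i j
  proof -
    have "transpose_mat M $$ (i,j) = M $$ (j,i)" using that Mc by simp
    then show ?thesis using Cons.prems(3) by simp
  qed
  have AV: "A = swap_block V"
  proof (rule eq_matI)
    fix i j assume "i < dim_row (swap_block V)" "j < dim_col (swap_block V)"
    then have i: "i < m + m" and j: "j < m + m" using Vc unfolding swap_block_def by auto
    have S: "swap_block V = four_block_mat (0\<^sub>m m m) V (transpose_mat V) (0\<^sub>m m m)"
      unfolding swap_block_def using Vc by simp
    show "A $$ (i,j) = swap_block V $$ (i,j)"
    proof (cases "i < m")
      case True
      show ?thesis
      proof (cases "j < m")
        case True
        have "M $$ (i,j) = 0"
        proof (rule ccontr)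
          assume "M $$ (i,j) \<noteq> 0"
          then have "lam ((x,m) # ps) l i = cnj (lam ((x,m) # ps) l j)" using ent[of i j] i j by simp
          then show False using \<open>i < m\<close> True xnot by simp
        qed
        then show ?thesis unfolding S A_def using i j \<open>i < m\<close> True Vc by simp
      next
        case False
        then show ?thesis unfolding S A_def using i j \<open>i < m\<close> False Vc Vi[of i "j - m"] by simp
      qed
    next
      case False
      note iF = False
      show ?thesis
      proof (cases "j < m")
        case True
        have "M $$ (i,j) = M $$ (j, i - m + m)" using Msym[of i j] i j iF by simp
        then show ?thesis unfolding S A_def using i j iF True Vc Vi[of j "i - m"] by simp
      next
        case False
        have "M $$ (i,j) = 0"
        proof (rule ccontr)
          assume "M $$ (i,j) \<noteq> 0"
          then have "lam ((x,m) # ps) l i = cnj (lam ((x,m) # ps) l j)" using ent[of i j] i j by simp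
          then show False using iF False i j xnot by simp
        qed
        then show ?thesis unfolding S A_def using i j iF False Vc by simp
      qed
    qed
  qed (use Vc in \<open>auto simp: swap_block_def A_def\<close>)
  have Vu: "unitary_mat m V"
    using swap_unitary[OF Vc] AD AV by (simp add: mult_2)
  let ?Q = "four_block_mat Ql (0\<^sub>m l k) (0\<^sub>m k l) Qk"
  have dB: "dim_row (diag_block_mat (map swap_block Vs @ [?Q])) = ?n" "dim_col (diag_block_mat (map swap_block Vs @ [?Q])) = ?n"
    using Dc IH(7) by auto
  have dS: "dim_row (swap_block V) = 2*m" "dim_col (swap_block V) = 2*m" using Vc unfolding swap_block_def by auto
  show ?case
  proof (rule exI[of _ "V # Vs"], rule exI[of _ Ql], rule exI[of _ Qk], intro conjI)
    show "length (V # Vs) = length (p # ps)" using IH by simp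
    show "\<forall>j<length (p # ps). unitary_mat (snd ((p # ps) ! j)) ((V # Vs) ! j)"
    proof (intro allI impI)
      fix j assume "j < length (p # ps)"
      then show "unitary_mat (snd ((p # ps) ! j)) ((V # Vs) ! j)"
        using Vu IH(2) p by (cases j) auto
    qed
    show "M = diag_block_mat (map swap_block (V # Vs) @ [?Q])"
      using Me AV IH(7) dB dS by (simp add: Let_def)
  qed (use IH in auto)
qed


lemma mat_eq_action: fixes A B :: "complex mat"
  assumes A: "A \<in> carrier_mat n n" and B: "B \<in> carrier_mat n n"
  and h: "\<forall>x\<in>carrier_vec n. A *\<^sub>v x = B *\<^sub>v x" shows "A = B"
proof (rule eq_matI)
  fix i j assume "i < dim_row B" "j < dim_col B"
  then have i: "i < n" and j: "j < n" using B by auto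
  have "(A *\<^sub>v unit_vec n j) $ i = (B *\<^sub>v unit_vec n j) $ i" using h by simp
  then show "A $$ (i,j) = B $$ (i,j)" using A B i j by simp
qed (use A B in auto)

lemma mult_vec_sq_carrier[simp]: "A \<in> carrier_mat n n \<Longrightarrow> v \<in> carrier_vec n \<Longrightarrow> A *\<^sub>v v \<in> carrier_vec n"
  by (rule mult_mat_vec_carrier)

lemma cancel3: fixes A B X :: "complex mat"
  assumes "A \<in> carrier_mat n n" "B \<in> carrier_mat n n" "X \<in> carrier_mat n n" "A * B = 1\<^sub>m n"
  shows "A * (B * X) = X"
proof -
  have "A * (B * X) = (A * B) * X" using assoc_mult_mat[OF assms(1-3)] by simp
  then show ?thesis using assms by simp
qed

theorem theorem3p3:
  fixes n l k :: nat and ns :: "nat list" and xis :: "complex list"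
    and U W :: "complex mat" and C :: "complex vec \<Rightarrow> complex vec"
  assumes U_unitary: "unitary_mat n U"
    and W_unitary: "unitary_mat n W"
    and len: "length xis = length ns"
    and ns_pos: "\<forall>j<length ns. ns ! j \<ge> 1"
    and dim: "2 * sum_list ns + l + k = n"
    and xis_T: "\<forall>j<length xis. cmod (xis ! j) = 1 \<and> xis ! j \<noteq> 1 \<and> xis ! j \<noteq> -1"
    and xis_distinct: "distinct (xis @ map cnj xis)"
    and U_eq: "U = W * diag_block_mat
                  (map (\<lambda>j. rot_block (xis ! j) (ns ! j)) [0..<length ns] @
                   [four_block_mat (1\<^sub>m l) (0\<^sub>m l k) (0\<^sub>m k l) (- 1\<^sub>m k)])
                * mat_adjoint W"
    and C_conj: "conjugation n C"
    and CUC: "\<forall>x\<in>carrier_vec n. C (U *\<^sub>v C x) = U *\<^sub>v x"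
  shows "\<exists>Vs Ql Qk.
           length Vs = length ns \<and>
           (\<forall>j<length ns. unitary_mat (ns ! j) (Vs ! j)) \<and>
           unitary_mat l Ql \<and> transpose_mat Ql = Ql \<and>
           unitary_mat k Qk \<and> transpose_mat Qk = Qk \<and>
           (\<forall>x\<in>carrier_vec n.
              C x = (W * diag_block_mat (map swap_block Vs @ [four_block_mat Ql (0\<^sub>m l k) (0\<^sub>m k l) Qk]))
                    *\<^sub>v conjugate (mat_adjoint W *\<^sub>v x))"
proof -
  define ps where "ps = zip xis ns"
  have pfst: "map fst ps = xis" and psnd: "map snd ps = ns" using len unfolding ps_def by auto
  have lenps: "length ps = length ns" using len unfolding ps_def by simp
  have "map (\<lambda>j. rot_block (xis ! j) (ns ! j)) [0..<length ns] = map (\<lambda>(x,m). rot_block x m) ps"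
    using len unfolding ps_def by (intro nth_equalityI) auto
  then have Ueq: "U = W * Dmat ps l k * mat_adjoint W" unfolding U_eq Dmat_def by simp
  have dimn: "dimp ps l k = n" using dim psnd by simp
  let ?D = "Dmat ps l k"
  have Dc: "?D \<in> carrier_mat n n" using Dmat_carrier[of ps l k] dimn by simp
  have Wc: "W \<in> carrier_mat n n" and WW: "mat_adjoint W * W = 1\<^sub>m n" "W * mat_adjoint W = 1\<^sub>m n"
    using W_unitary unfolding unitary_mat_def by auto
  have Uc: "U \<in> carrier_mat n n" using U_unitary unfolding unitary_mat_def by auto
  define N where "N = cmat n C"
  have Nc: "N \<in> carrier_mat n n" unfolding N_def by simp
  have rep: "C x = N *\<^sub>v conjugate x" if "x \<in> carrier_vec n" for x
    unfolding N_def using conj_rep[OF C_conj that] .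
  have Ccar: "C x \<in> carrier_vec n" if "x \<in> carrier_vec n" for x
    using C_conj that unfolding conjugation_def by auto
  have CC: "C (C x) = x" if "x \<in> carrier_vec n" for x
    using C_conj that unfolding conjugation_def by auto
  have NcN: "N * cm N = 1\<^sub>m n"
  proof (rule mat_eq_action[of _ n])
    show "\<forall>x\<in>carrier_vec n. (N * cm N) *\<^sub>v x = 1\<^sub>m n *\<^sub>v x"
    proof
      fix x :: "complex vec" assume x: "x \<in> carrier_vec n"
      have "(N * cm N) *\<^sub>v x = N *\<^sub>v (cm N *\<^sub>v x)" using Nc x by (simp add: assoc_mult_mat_vec[of _ n n _ n])
      also have "cm N *\<^sub>v x = conjugate (N *\<^sub>v conjugate x)"
        using conj_mult_vec[of "conjugate x" N] Nc x by simp
      also have "N *\<^sub>v conjugate x = C x" using rep[OF x] by simp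
      also have "N *\<^sub>v conjugate (C x) = C (C x)" using rep[OF Ccar[OF x]] by simp
      finally show "(N * cm N) *\<^sub>v x = 1\<^sub>m n *\<^sub>v x" using CC[OF x] x by simp
    qed
  qed (use Nc in auto)
  have iso: "\<forall>x\<in>carrier_vec n. vnorm_sq (N *\<^sub>v x) = vnorm_sq x"
  proof
    fix x :: "complex vec" assume x: "x \<in> carrier_vec n"
    have "N *\<^sub>v x = C (conjugate x)" using rep[of "conjugate x"] x by simp
    then have "vnorm_sq (N *\<^sub>v x) = vnorm_sq (conjugate x)"
      using C_conj x unfolding conjugation_def by simp
    also have "\<dots> = vnorm_sq x" unfolding vnorm_sq_def by simp
    finally show "vnorm_sq (N *\<^sub>v x) = vnorm_sq x" .
  qed
  have adjNN: "mat_adjoint N * N = 1\<^sub>m n" using iso_unitary[OF Nc iso] .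
  have NadjN: "N * mat_adjoint N = 1\<^sub>m n"
    using mat_mult_left_right_inverse[OF adj_carrier[OF Nc] Nc adjNN] .
  have Nu: "unitary_mat n N" using Nc adjNN NadjN unfolding unitary_mat_def by simp
  have cmN: "cm N = mat_adjoint N"
  proof -
    have "cm N = (mat_adjoint N * N) * cm N" using adjNN Nc by simp
    also have "\<dots> = mat_adjoint N * (N * cm N)" using Nc by (simp add: assoc_mult_mat[of _ n n _ n _ n])
    finally show ?thesis using NcN Nc by simp
  qed
  have NT: "transpose_mat N = N" using cm_adj[of N] cmN[symmetric] by simp
  have comm: "N * cm U = U * N"
  proof -
    have 1: "N * cm U * cm N = U"
    proof (rule mat_eq_action[of _ n])
      show "\<forall>x\<in>carrier_vec n. (N * cm U * cm N) *\<^sub>v x = U *\<^sub>v x"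
      proof
        fix x :: "complex vec" assume x: "x \<in> carrier_vec n"
        have "(N * cm U * cm N) *\<^sub>v x = N *\<^sub>v (cm U *\<^sub>v (cm N *\<^sub>v x))" using Nc Uc x by (simp add: assoc_mult_mat_vec[of _ n n _ n])
        also have "cm N *\<^sub>v x = conjugate (C x)"
          using conj_mult_vec[of "conjugate x" N] Nc x rep[OF x] by simp
        also have "cm U *\<^sub>v conjugate (C x) = conjugate (U *\<^sub>v C x)"
          using conj_mult_vec[of "C x" U] Uc Ccar[OF x] by simp
        also have "N *\<^sub>v conjugate (U *\<^sub>v C x) = C (U *\<^sub>v C x)"
          using rep[of "U *\<^sub>v C x"] Uc Ccar[OF x] by simp
        finally show "(N * cm U * cm N) *\<^sub>v x = U *\<^sub>v x" using CUC x by simp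
      qed
    qed (use Nc Uc in auto)
    have "N * cm U = N * cm U * (cm N * N)" using cmN adjNN Nc Uc by simp
    also have "\<dots> = (N * cm U * cm N) * N" using Nc Uc by (simp add: assoc_mult_mat[of _ n n _ n _ n])
    finally show ?thesis using 1 by simp
  qed
  define M where "M = mat_adjoint W * N * cm W"
  have Mc: "M \<in> carrier_mat n n" unfolding M_def using Wc Nc by simp
  have Mu: "unitary_mat n M" unfolding M_def
    by (intro unitary_mult unitary_cm unitary_adj W_unitary Nu)
  have MT: "transpose_mat M = M"
  proof -
    have "transpose_mat M = transpose_mat (cm W) * (transpose_mat N * transpose_mat (mat_adjoint W))"
      unfolding M_def using Wc Nc
      by (simp add: transpose_mult[of _ n n _ n] assoc_mult_mat[of _ n n _ n _ n])
    also have "\<dots> = M"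
    proof -
      have t1: "transpose_mat (cm W) = mat_adjoint W" by (simp add: adj_alt)
      have t2: "transpose_mat (mat_adjoint W) = cm W" by (simp add: adj_alt)
      show ?thesis unfolding M_def NT t1 t2 using Wc Nc by (simp add: assoc_mult_mat[of _ n n _ n _ n])
    qed
    finally show ?thesis .
  qed
  have cWadjW: "cm W * transpose_mat W = 1\<^sub>m n"
    using cm_mult[of W "mat_adjoint W"] WW Wc by (simp add: cm_adj)
  have Dadj: "?D = mat_adjoint W * U * W"
    unfolding Ueq using Wc Dc WW by (simp add: assoc_mult_mat[of _ n n _ n _ n] cancel3[of _ n])
  have cU: "cm U = cm W * cm ?D * transpose_mat W"
    unfolding Ueq using Wc Dc by (simp add: cm_mult cm_adj)
  have cUW: "cm U * cm W = cm W * cm ?D"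
  proof -
    have tW: "transpose_mat W * cm W = 1\<^sub>m n"
      using cm_mult[of "mat_adjoint W" W] WW Wc by (simp add: cm_adj)
    show ?thesis unfolding cU using Wc Dc tW
      by (simp add: assoc_mult_mat[of _ n n _ n _ n] cancel3[of _ n])
  qed
  have Mcomm: "M * cm ?D = ?D * M"
  proof -
    have "M * cm ?D = mat_adjoint W * (N * (cm W * cm ?D))"
      unfolding M_def using Wc Nc Dc by (simp add: assoc_mult_mat[of _ n n _ n _ n])
    also have "\<dots> = mat_adjoint W * ((N * cm U) * cm W)"
      unfolding cUW[symmetric] using Wc Nc Uc by (simp add: assoc_mult_mat[of _ n n _ n _ n])
    also have "\<dots> = mat_adjoint W * (U * (N * cm W))"
      unfolding comm using Wc Nc Uc by (simp add: assoc_mult_mat[of _ n n _ n _ n])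
    also have "\<dots> = mat_adjoint W * (U * (W * (mat_adjoint W * (N * cm W))))"
      using Wc Nc Uc WW by (simp add: cancel3[of _ n])
    also have "\<dots> = ?D * M"
      unfolding Dadj M_def using Wc Nc Uc by (simp add: assoc_mult_mat[of _ n n _ n _ n])
    finally show ?thesis .
  qed
  have ent: "\<forall>i j. i < dimp ps l k \<longrightarrow> j < dimp ps l k \<longrightarrow> M $$ (i,j) \<noteq> 0 \<longrightarrow> lam ps l i = cnj (lam ps l j)"
    using entry_cond[of M ps l k] Mc Mcomm dimn by auto
  have xT: "\<forall>x\<in>set (map fst ps). x \<noteq> 1 \<and> x \<noteq> -1"
    unfolding pfst using xis_T by (auto simp: in_set_conv_nth)
  have dst: "distinct (map fst ps @ map cnj (map fst ps))" unfolding pfst by (rule xis_distinct)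
  obtain Vs Ql Qk where G: "length Vs = length ps" "\<forall>j<length ps. unitary_mat (snd (ps!j)) (Vs!j)"
     "unitary_mat l Ql" "transpose_mat Ql = Ql" "unitary_mat k Qk" "transpose_mat Qk = Qk"
     "M = diag_block_mat (map swap_block Vs @ [four_block_mat Ql (0\<^sub>m l k) (0\<^sub>m k l) Qk])"
    using blockG[of M ps l k] Mc Mu MT ent xT dst dimn by auto
  have sn: "snd (ps ! j) = ns ! j" if "j < length ns" for j
    using that len unfolding ps_def by simp
  have NWM: "N = W * M * transpose_mat W"
  proof -
    have "W * M * transpose_mat W = W * (mat_adjoint W * (N * (cm W * transpose_mat W)))"
      unfolding M_def using Wc Nc by (simp add: assoc_mult_mat[of _ n n _ n _ n])
    also have "\<dots> = N" using cWadjW WW Wc Nc by (simp add: cancel3[of _ n])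
    finally show ?thesis by simp
  qed
  show ?thesis
  proof (intro exI conjI)
    show "length Vs = length ns" using G lenps by simp
    show "\<forall>j<length ns. unitary_mat (ns ! j) (Vs ! j)" using G(2) sn lenps by auto
    show "\<forall>x\<in>carrier_vec n. C x = (W * diag_block_mat (map swap_block Vs @ [four_block_mat Ql (0\<^sub>m l k) (0\<^sub>m k l) Qk]))
                    *\<^sub>v conjugate (mat_adjoint W *\<^sub>v x)"
    proof
      fix x :: "complex vec" assume x: "x \<in> carrier_vec n"
      have "conjugate (mat_adjoint W *\<^sub>v x) = transpose_mat W *\<^sub>v conjugate x"
        using conj_mult_vec[of x "mat_adjoint W"] Wc x by (simp add: cm_adj)
      then have "(W * M) *\<^sub>v conjugate (mat_adjoint W *\<^sub>v x) = (W * M * transpose_mat W) *\<^sub>v conjugate x"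
        using Wc Mc x by (simp add: assoc_mult_mat_vec[of _ n n _ n])
      then show "C x = (W * diag_block_mat (map swap_block Vs @ [four_block_mat Ql (0\<^sub>m l k) (0\<^sub>m k l) Qk]))
                    *\<^sub>v conjugate (mat_adjoint W *\<^sub>v x)"
        unfolding G(7)[symmetric] NWM[symmetric] rep[OF x] by simp
    qed
  qed (use G in auto)
qed

end
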